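(* In any execution of $\mathcal{U}$, suppose $S$ stores operation $o$ at time $T$ and stores operation $o'$ at time $T' > T$. If $o \neq o'$ then $o$ is done at time $T'$.
   Context: Model: an asynchronous shared-memory system with possibly infinitely many processes, any of which may crash, communicating via atomic shared objects. A fetch-and-increment (F\&I) object stores an integer; F\&I$(C)$ atomically returns the current value and increments it. A generalized-compare-and-swap (GCAS) object $O$ stores a value and supports Read$(O)$ and GCAS$(c, O, v_1, v_2)$, which atomically does: if $c(\text{current value of } O, v_1)$ holds then set $O := v_2$ and return true, else return false. Tuples are compared componentwise for $=$; GCAS$(>, A, (t,-,-), v)$ succeeds iff the time field of $A$ is strictly greater than $t$. Implemented type $\mathcal{T} = (OP, RES, Q, \delta)$ with initial state $s_0$; a procedure $apply_{\mathcal{T}}(o,s)$ returns some $(s',r)$ with $(s,o,s',r)\in\delta$. $NULL$ is a value different from every response of $\mathcal{T}$, and $NOOP$ is a name different from every operation of $\mathcal{T}$. Algorithm $\mathcal{U}$: each process $p$ owns a GCAS object $H_p$ with fields $(time, response)$. Shared objects: F\&I object $C$, initially $1$; GCAS object $A$ with fields $(time, op, ptr)$, initially $(0, NOOP, h(NOOP))$, where $h(NOOP)$ is a pointer to an immutable location containing $(0,\perp)$; GCAS object $S$ with fields $(time, state, response, ptr)$, initially $(0, s_0, \perp, h(NOOP))$. Process $p$ performs operation $o$ by calling DoOp$(o)$: (1) DoOp$(o)$ invoked; (2) $t := $ F\&I$(C)$; (3) $H_p := (t, NULL)$; (4) while $H_p = (t, NULL)$ do: (5) $(t^*, s^*, r^*,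 roptr^* ) := S$; (6) GCAS$(=, *roptr^*, (t^*, NULL), (t^*, r^* ))$; (7) GCAS$(>, A, (t,-,-), (t, o, \&H_p))$; (8) $(t', o', roptr') := A$; (9) $(\hat t, \hat r) := *roptr'$; (10) if $(\hat t,\hat r) = (t', NULL)$ then (11) $(s', r') := apply_{\mathcal{T}}(o', s^* )$; (12) GCAS$(=, S, (t^*,s^*,r^*,roptr^* ), (t', s', r', roptr'))$; (13) else GCAS$(=, A, (t', o', roptr'), (t, o, \&H_p))$; end while; (14) return $H_p.response$. Notation: an "operation" $o$ means one invocation of DoOp$(o)$ (or the initial $NOOP$). $p(o)$ is the process executing it; $t(o)$ is the value returned by its F\&I at line 2, or $\infty$ if line 2 has not been executed; $h(o)$ is $H_{p(o)}$. For $NOOP$: $t(NOOP)=0$ and $h(NOOP)$ is the immutable location containing $(0,\perp)$. Operation $o$ is done at time $T$ if at some time $T'\le T$, $h(o) = (t(o), r)$ with $r \neq NULL$. "Operation $o$ is stored in $S$" at a time means $S = (t(o), -, r, h(o))$ for some $r$ at that time (at every time exactly one operation is stored in $S$). *)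

theory Defs
  imports Main
begin

text \<open>Processes range over an arbitrary (possibly infinite) type 'p; crashes are modelled by
  processes simply taking no further steps (arbitrary interleavings).\<close>

datatype 'r rv = Null | Bot | Val 'r
datatype 'o opv = NOOP | Op 'o
datatype 'p ptr = HNoop | HP 'p             \<comment> \<open>h(NOOP) or &H_p\<close>
datatype pcv = Idle | L2 | L3 | L4 | L5 | L6 | L7 | L8 | L9 | L10 | L11 | L12 | L13 | L14

record ('o,'r,'st,'p) lstate =
  lpc :: pcv
  lop :: 'o
  lt  :: nat
  lts :: nat
  lss :: 'st
  lrs :: "'r rv"
  lps :: "'p ptr"
  ltA :: nat
  loA :: "'o opv"
  lpA :: "'p ptr"
  lth :: nat
  lrh :: "'r rv"
  lsn :: 'st
  lrn :: 'r

record ('o,'r,'st,'p) config =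
  C :: nat
  A :: "nat \<times> 'o opv \<times> 'p ptr"
  S :: "nat \<times> 'st \<times> 'r rv \<times> 'p ptr"
  H :: "'p \<Rightarrow> nat \<times> 'r rv"
  L :: "'p \<Rightarrow> ('o,'r,'st,'p) lstate"

definition setL :: "('o,'r,'st,'p) config \<Rightarrow> 'p \<Rightarrow> ('o,'r,'st,'p) lstate \<Rightarrow> ('o,'r,'st,'p) config" where
  "setL c p l = c\<lparr>L := (L c)(p := l)\<rparr>"

definition deref :: "('o,'r,'st,'p) config \<Rightarrow> 'p ptr \<Rightarrow> nat \<times> 'r rv" where
  "deref c x = (case x of HNoop \<Rightarrow> (0, Bot) | HP q \<Rightarrow> H c q)"

text \<open>One atomic step of process p. delta is the transition relation of T:
  (s, o, s', r) \<in> delta.\<close>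
definition step :: "('st \<times> 'o \<times> 'st \<times> 'r) set \<Rightarrow> 'p \<Rightarrow> ('o,'r,'st,'p) config \<Rightarrow> ('o,'r,'st,'p) config \<Rightarrow> bool" where
  "step \<delta> p c c' = (let l = L c p in case lpc l of
     Idle \<Rightarrow> (\<exists>ob. c' = setL c p (l\<lparr>lpc := L2, lop := ob\<rparr>))
   | L2 \<Rightarrow> c' = (setL c p (l\<lparr>lpc := L3, lt := C c\<rparr>))\<lparr>C := Suc (C c)\<rparr>
   | L3 \<Rightarrow> c' = (setL c p (l\<lparr>lpc := L4\<rparr>))\<lparr>H := (H c)(p := (lt l, Null))\<rparr>
   | L4 \<Rightarrow> c' = setL c p (l\<lparr>lpc := (if H c p = (lt l, Null) then L5 else L14)\<rparr>)
   | L5 \<Rightarrow> (case S c of (a, b, d, e) \<Rightarrow>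
             c' = setL c p (l\<lparr>lpc := L6, lts := a, lss := b, lrs := d, lps := e\<rparr>))
   | L6 \<Rightarrow> c' = (let c1 = setL c p (l\<lparr>lpc := L7\<rparr>) in
             case lps l of HNoop \<Rightarrow> c1
             | HP q \<Rightarrow> (if H c q = (lts l, Null) then c1\<lparr>H := (H c)(q := (lts l, lrs l))\<rparr> else c1))
   | L7 \<Rightarrow> c' = (let c1 = setL c p (l\<lparr>lpc := L8\<rparr>) in
             if fst (A c) > lt l then c1\<lparr>A := (lt l, Op (lop l), HP p)\<rparr> else c1)
   | L8 \<Rightarrow> (case A c of (a, b, d) \<Rightarrow>
             c' = setL c p (l\<lparr>lpc := L9, ltA := a, loA := b, lpA := d\<rparr>))
   | L9 \<Rightarrow> c' = setL c p (l\<lparr>lpc := L10, lth := fst (deref c (lpA l)), lrh := snd (deref c (lpA l))\<rparr>)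
   | L10 \<Rightarrow> c' = setL c p (l\<lparr>lpc := (if (lth l, lrh l) = (ltA l, Null) then L11 else L13)\<rparr>)
   | L11 \<Rightarrow> (\<exists>ob sn rn. loA l = Op ob \<and> (lss l, ob, sn, rn) \<in> \<delta> \<and>
             c' = setL c p (l\<lparr>lpc := L12, lsn := sn, lrn := rn\<rparr>))
   | L12 \<Rightarrow> c' = (let c1 = setL c p (l\<lparr>lpc := L4\<rparr>) in
             if S c = (lts l, lss l, lrs l, lps l) then c1\<lparr>S := (ltA l, lsn l, Val (lrn l), lpA l)\<rparr> else c1)
   | L13 \<Rightarrow> c' = (let c1 = setL c p (l\<lparr>lpc := L4\<rparr>) in
             if A c = (ltA l, loA l, lpA l) then c1\<lparr>A := (lt l, Op (lop l), HP p)\<rparr> else c1)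
   | L14 \<Rightarrow> c' = setL c p (l\<lparr>lpc := Idle\<rparr>))"

definition init :: "'st \<Rightarrow> ('o,'r,'st,'p) config \<Rightarrow> bool" where
  "init s0 c = (C c = 1 \<and> A c = (0, NOOP, HNoop) \<and> S c = (0, s0, Bot, HNoop)
                \<and> (\<forall>p. H c p = (0, Bot)) \<and> (\<forall>p. lpc (L c p) = Idle))"

text \<open>An execution: configurations indexed by time; each transition is an atomic step of some
  process or a stutter (so finite executions are covered too).\<close>
definition execution :: "('st \<times> 'o \<times> 'st \<times> 'r) set \<Rightarrow> 'st \<Rightarrow> (nat \<Rightarrow> ('o,'r,'st,'p) config) \<Rightarrow> bool" where
  "execution \<delta> s0 ex = (init s0 (ex 0) \<and>
     (\<forall>i. ex (Suc i) = ex i \<or> (\<exists>p. step \<delta> p (ex i) (ex (Suc i)))))"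

text \<open>Operations: the initial NOOP, or the invocation of DoOp by process p at time i.\<close>
datatype 'p operation = NoopOp | Inv 'p nat

fun is_op :: "(nat \<Rightarrow> ('o,'r,'st,'p) config) \<Rightarrow> 'p operation \<Rightarrow> bool" where
  "is_op ex NoopOp = True"
| "is_op ex (Inv p i) = (lpc (L (ex i) p) = Idle \<and> lpc (L (ex (Suc i)) p) = L2)"

definition fi_step :: "(nat \<Rightarrow> ('o,'r,'st,'p) config) \<Rightarrow> 'p \<Rightarrow> nat \<Rightarrow> bool" where
  "fi_step ex p j = (lpc (L (ex j) p) = L2 \<and> lpc (L (ex (Suc j)) p) = L3)"

text \<open>t(o): value returned by the F\&I at line 2 (None encodes \<infinity>).\<close>
fun t_of :: "(nat \<Rightarrow> ('o,'r,'st,'p) config) \<Rightarrow> 'p operation \<Rightarrow> nat option" where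
  "t_of ex NoopOp = Some 0"
| "t_of ex (Inv p i) = (if \<exists>j>i. fi_step ex p j
       then Some (C (ex (LEAST j. i < j \<and> fi_step ex p j))) else None)"

fun h_of :: "'p operation \<Rightarrow> 'p ptr" where
  "h_of NoopOp = HNoop"
| "h_of (Inv p i) = HP p"

definition stored :: "(nat \<Rightarrow> ('o,'r,'st,'p) config) \<Rightarrow> nat \<Rightarrow> 'p operation \<Rightarrow> bool" where
  "stored ex T x = (\<exists>tt. t_of ex x = Some tt \<and> fst (S (ex T)) = tt
                        \<and> snd (snd (snd (S (ex T)))) = h_of x)"

definition is_done :: "(nat \<Rightarrow> ('o,'r,'st,'p) config) \<Rightarrow> nat \<Rightarrow> 'p operation \<Rightarrow> bool" where
  "is_done ex T x = (\<exists>T'\<le>T. \<exists>tt r. t_of ex x = Some tt \<and> deref (ex T') (h_of x) = (tt, r) \<and> r \<noteq> Null)"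

end

theory Submission
  imports Defs
begin

definition bnd :: "('o,'r,'st,'p) config \<Rightarrow> nat \<Rightarrow> 'p \<Rightarrow> bool" where
 "bnd c t p \<longleftrightarrow> t < C c \<and> (lpc (L c p) \<noteq> Idle \<and> lpc (L c p) \<noteq> L2 \<longrightarrow> t \<le> lt (L c p)) \<and> (lpc (L c p) = L3 \<longrightarrow> t < lt (L c p))"

definition pairok :: "('o,'r,'st,'p) config \<Rightarrow> nat \<Rightarrow> 'p ptr \<Rightarrow> bool" where
 "pairok c t x \<longleftrightarrow> (\<forall>p. x = HP p \<longrightarrow> bnd c t p)"

lemma L_other: "step \<delta> q c c' \<Longrightarrow> p \<noteq> q \<Longrightarrow> L c' p = L c p"
  by (cases "lpc (L c q)") (auto simp: step_def Let_def setL_def split: prod.splits ptr.splits if_splits)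

lemma C_mono: "step \<delta> q c c' \<Longrightarrow> C c \<le> C c'"
  by (cases "lpc (L c q)") (auto simp: step_def Let_def setL_def split: prod.splits ptr.splits if_splits)

lemma C_same: "step \<delta> q c c' \<Longrightarrow> lpc (L c q) \<noteq> L2 \<Longrightarrow> C c' = C c"
  by (cases "lpc (L c q)") (auto simp: step_def Let_def setL_def split: prod.splits ptr.splits if_splits)

lemma lt_same: "step \<delta> q c c' \<Longrightarrow> lpc (L c q) \<noteq> L2 \<Longrightarrow> lt (L c' q) = lt (L c q)"
  by (cases "lpc (L c q)") (auto simp: step_def Let_def setL_def split: prod.splits ptr.splits if_splits)

lemma bnd_self: "step \<delta> q c c' \<Longrightarrow> bnd c t q \<Longrightarrow> bnd c' t q"
  by (cases "lpc (L c q)") (auto simp: bnd_def step_def Let_def setL_def split: prod.splits ptr.splits if_splits)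

lemma bnd_step: assumes a: "step \<delta> q c c'" "bnd c t p" shows "bnd c' t p"
proof (cases "p = q")
  case True then show ?thesis using bnd_self[of \<delta> q c c' t] a by simp
next
  case False
  then show ?thesis using a L_other[OF a(1) False] C_mono[OF a(1)] unfolding bnd_def by auto
qed

lemma pairok_step: "step \<delta> q c c' \<Longrightarrow> pairok c t x \<Longrightarrow> pairok c' t x"
  unfolding pairok_def using bnd_step by metis

fun r6 :: "pcv \<Rightarrow> bool" where
  "r6 L6 = True" | "r6 L7 = True" | "r6 L8 = True" | "r6 L9 = True" | "r6 L10 = True" | "r6 L11 = True" | "r6 L12 = True" | "r6 _ = False"
fun r7 :: "pcv \<Rightarrow> bool" where
  "r7 L7 = True" | "r7 L8 = True" | "r7 L9 = True" | "r7 L10 = True" | "r7 L11 = True" | "r7 L12 = True" | "r7 _ = False"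
fun r9 :: "pcv \<Rightarrow> bool" where
  "r9 L9 = True" | "r9 L10 = True" | "r9 L11 = True" | "r9 L12 = True" | "r9 L13 = True" | "r9 _ = False"

lemma r7_r6: "r7 x \<Longrightarrow> r6 x" by (cases x) auto

definition invA where "invA c \<longleftrightarrow> pairok c (fst (A c)) (snd (snd (A c)))"
definition invS where "invS c \<longleftrightarrow> pairok c (fst (S c)) (snd (snd (snd (S c)))) \<and> fst (snd (snd (S c))) \<noteq> Null"
definition invLs where "invLs c \<longleftrightarrow> (\<forall>q. r6 (lpc (L c q)) \<longrightarrow> pairok c (lts (L c q)) (lps (L c q)) \<and> lrs (L c q) \<noteq> Null)"
definition invLA where "invLA c \<longleftrightarrow> (\<forall>q. r9 (lpc (L c q)) \<longrightarrow> pairok c (ltA (L c q)) (lpA (L c q)))"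
definition invH where "invH c \<longleftrightarrow> (\<forall>q p. r7 (lpc (L c q)) \<and> lps (L c q) = HP p \<longrightarrow> H c p \<noteq> (lts (L c q), Null))"
definition invC where "invC c \<longleftrightarrow> (\<forall>p. lpc (L c p) \<noteq> Idle \<and> lpc (L c p) \<noteq> L2 \<longrightarrow> lt (L c p) < C c)"
definition inv where "inv c \<longleftrightarrow> invA c \<and> invS c \<and> invLs c \<and> invLA c \<and> invH c \<and> invC c"

lemma inv_init: "init s0 c \<Longrightarrow> inv c"
  by (auto simp: init_def inv_def invA_def invS_def invLs_def invLA_def invH_def invC_def pairok_def)

lemma invC_step: assumes "step \<delta> q c c'" "invC c" shows "invC c'"
  unfolding invC_def
proof (intro allI impI)
  fix p assume h: "lpc (L c' p) \<noteq> Idle \<and> lpc (L c' p) \<noteq> L2"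
  show "lt (L c' p) < C c'"
  proof (cases "p = q")
    case False then show ?thesis using h assms L_other[OF assms(1) False] C_mono[OF assms(1)] unfolding invC_def
      by (metis order_less_le_trans)
  next
    case True then show ?thesis using h assms unfolding invC_def
      by (cases "lpc (L c q)") (auto simp: step_def Let_def setL_def split: prod.splits ptr.splits if_splits)
  qed
qed

lemma A_change: "step \<delta> q c c' \<Longrightarrow> A c' = A c \<or> ((lpc (L c q) = L7 \<or> lpc (L c q) = L13) \<and> A c' = (lt (L c q), Op (lop (L c q)), HP q))"
  by (cases "lpc (L c q)") (auto simp: step_def Let_def setL_def split: prod.splits ptr.splits if_splits)

lemma S_change: "step \<delta> q c c' \<Longrightarrow> S c' = S c \<or> (lpc (L c q) = L12 \<and> S c = (lts (L c q), lss (L c q), lrs (L c q), lps (L c q))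
   \<and> S c' = (ltA (L c q), lsn (L c q), Val (lrn (L c q)), lpA (L c q)))"
  by (cases "lpc (L c q)") (auto simp: step_def Let_def setL_def split: prod.splits ptr.splits if_splits)

lemma H_change: "step \<delta> q c c' \<Longrightarrow> H c' p = H c p \<or> (lpc (L c q) = L3 \<and> p = q \<and> H c' p = (lt (L c q), Null))
   \<or> (lpc (L c q) = L6 \<and> lps (L c q) = HP p \<and> H c p = (lts (L c q), Null) \<and> H c' p = (lts (L c q), lrs (L c q)))"
  by (cases "lpc (L c q)") (auto simp: step_def Let_def setL_def split: prod.splits ptr.splits if_splits)

lemma Ls_change: "step \<delta> q c c' \<Longrightarrow> r6 (lpc (L c' q)) \<Longrightarrow>
   (lpc (L c q) = L5 \<and> S c = (lts (L c' q), lss (L c' q), lrs (L c' q), lps (L c' q)))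
 \<or> (r6 (lpc (L c q)) \<and> lts (L c' q) = lts (L c q) \<and> lps (L c' q) = lps (L c q) \<and> lrs (L c' q) = lrs (L c q))"
  by (cases "lpc (L c q)") (auto simp: step_def Let_def setL_def split: prod.splits ptr.splits if_splits)

lemma Ls7_change: "step \<delta> q c c' \<Longrightarrow> r7 (lpc (L c' q)) \<Longrightarrow>
   (lpc (L c q) = L6 \<or> r7 (lpc (L c q))) \<and> lts (L c' q) = lts (L c q) \<and> lps (L c' q) = lps (L c q) \<and> lrs (L c' q) = lrs (L c q)"
  by (cases "lpc (L c q)") (auto simp: step_def Let_def setL_def split: prod.splits ptr.splits if_splits)

lemma LA_change: "step \<delta> q c c' \<Longrightarrow> r9 (lpc (L c' q)) \<Longrightarrow>
   (lpc (L c q) = L8 \<and> A c = (ltA (L c' q), loA (L c' q), lpA (L c' q)))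
 \<or> (r9 (lpc (L c q)) \<and> ltA (L c' q) = ltA (L c q) \<and> lpA (L c' q) = lpA (L c q))"
  by (cases "lpc (L c q)") (auto simp: step_def Let_def setL_def split: prod.splits ptr.splits if_splits)

lemma invA_step: assumes st: "step \<delta> q c c'" and i: "inv c" shows "invA c'"
proof -
  from A_change[OF st] show ?thesis
  proof
    assume "A c' = A c" then show ?thesis using i pairok_step[OF st] unfolding inv_def invA_def by simp
  next
    assume h: "(lpc (L c q) = L7 \<or> lpc (L c q) = L13) \<and> A c' = (lt (L c q), Op (lop (L c q)), HP q)"
    have "lt (L c q) < C c" using h i unfolding inv_def invC_def by auto
    then have "pairok c (lt (L c q)) (HP q)" using h unfolding pairok_def bnd_def by auto
    then show ?thesis using h pairok_step[OF st] unfolding invA_def by simp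
  qed
qed

lemma invS_step: assumes st: "step \<delta> q c c'" and i: "inv c" shows "invS c'"
proof -
  from S_change[OF st] show ?thesis
  proof
    assume "S c' = S c" then show ?thesis using i pairok_step[OF st] unfolding inv_def invS_def by simp
  next
    assume h: "lpc (L c q) = L12 \<and> S c = (lts (L c q), lss (L c q), lrs (L c q), lps (L c q))
   \<and> S c' = (ltA (L c q), lsn (L c q), Val (lrn (L c q)), lpA (L c q))"
    have "pairok c (ltA (L c q)) (lpA (L c q))" using h i unfolding inv_def invLA_def by auto
    then show ?thesis using h pairok_step[OF st] unfolding invS_def by simp
  qed
qed

lemma invLs_step: assumes st: "step \<delta> q c c'" and i: "inv c" shows "invLs c'"
  unfolding invLs_def
proof (intro allI impI)
  fix p assume h: "r6 (lpc (L c' p))"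
  show "pairok c' (lts (L c' p)) (lps (L c' p)) \<and> lrs (L c' p) \<noteq> Null"
  proof (cases "p = q")
    case False then show ?thesis using h i L_other[OF st False] pairok_step[OF st] unfolding inv_def invLs_def
      by metis
  next
    case True
    from Ls_change[OF st h[unfolded True]] show ?thesis
    proof
      assume "lpc (L c q) = L5 \<and> S c = (lts (L c' q), lss (L c' q), lrs (L c' q), lps (L c' q))"
      then show ?thesis using True i pairok_step[OF st] unfolding inv_def invS_def by auto
    next
      assume "r6 (lpc (L c q)) \<and> lts (L c' q) = lts (L c q) \<and> lps (L c' q) = lps (L c q) \<and> lrs (L c' q) = lrs (L c q)"
      then show ?thesis using True i pairok_step[OF st] unfolding inv_def invLs_def by metis
    qed
  qed
qed

lemma invLA_step: assumes st: "step \<delta> q c c'" and i: "inv c" shows "invLA c'"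
  unfolding invLA_def
proof (intro allI impI)
  fix p assume h: "r9 (lpc (L c' p))"
  show "pairok c' (ltA (L c' p)) (lpA (L c' p))"
  proof (cases "p = q")
    case False then show ?thesis using h i L_other[OF st False] pairok_step[OF st] unfolding inv_def invLA_def
      by metis
  next
    case True
    from LA_change[OF st h[unfolded True]] show ?thesis
    proof
      assume "lpc (L c q) = L8 \<and> A c = (ltA (L c' q), loA (L c' q), lpA (L c' q))"
      then show ?thesis using True i pairok_step[OF st] unfolding inv_def invA_def by auto
    next
      assume "r9 (lpc (L c q)) \<and> ltA (L c' q) = ltA (L c q) \<and> lpA (L c' q) = lpA (L c q)"
      then show ?thesis using True i pairok_step[OF st] unfolding inv_def invLA_def by metis
    qed
  qed
qed

lemma invH_step: assumes st: "step \<delta> q c c'" and i: "inv c" shows "invH c'"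
  unfolding invH_def
proof (intro allI impI)
  fix q' p assume h: "r7 (lpc (L c' q')) \<and> lps (L c' q') = HP p"
  show "H c' p \<noteq> (lts (L c' q'), Null)"
  proof (cases "q' = q \<and> lpc (L c q) = L6")
    case True
    then have e: "lts (L c' q') = lts (L c q)" "lps (L c q) = HP p" "lrs (L c q) \<noteq> Null"
      using Ls7_change[OF st] h i unfolding inv_def invLs_def by auto
    from H_change[OF st, of p] show ?thesis
    proof (elim disjE)
      assume hh: "H c' p = H c p"
      have "H c p \<noteq> (lts (L c q), Null)" using True st e hh
        by (auto simp: step_def Let_def setL_def)
      then show ?thesis using e hh by simp
    qed (use e True in auto)
  next
    case False
    then have old: "r7 (lpc (L c q')) \<and> lts (L c' q') = lts (L c q') \<and> lps (L c' q') = lps (L c q')"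
      using h Ls7_change[OF st] L_other[OF st] by (cases "q' = q") auto
    then have hc: "H c p \<noteq> (lts (L c q'), Null)" using h i unfolding inv_def invH_def by auto
    have po: "pairok c (lts (L c q')) (HP p)" using old h i r7_r6 unfolding inv_def invLs_def by metis
    from H_change[OF st, of p] show ?thesis
    proof (elim disjE)
      assume "lpc (L c q) = L3 \<and> p = q \<and> H c' p = (lt (L c q), Null)"
      then show ?thesis using po old unfolding pairok_def bnd_def by auto
    qed (use hc old i in \<open>auto simp: inv_def invLs_def\<close>)
  qed
qed

lemma inv_step: "step \<delta> q c c' \<Longrightarrow> inv c \<Longrightarrow> inv c'"
  by (meson inv_def invA_step invS_step invLs_step invLA_step invH_step invC_step)

lemma ex_tr: "execution \<delta> s0 ex \<Longrightarrow> ex (Suc i) = ex i \<or> (\<exists>q. step \<delta> q (ex i) (ex (Suc i)))"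
  unfolding execution_def by blast

lemma inv_ex: assumes "execution \<delta> s0 ex" shows "inv (ex k)"
proof (induction k)
  case 0 show ?case by (rule inv_init[of s0]) (use assms in \<open>simp add: execution_def\<close>)
next
  case (Suc k) then show ?case using ex_tr[OF assms, of k] inv_step by metis
qed

lemma C_ex_Suc: "execution \<delta> s0 ex \<Longrightarrow> C (ex k) \<le> C (ex (Suc k))"
  using ex_tr[of \<delta> s0 ex k] C_mono by fastforce

lemma C_ex_mono: assumes "execution \<delta> s0 ex" "a \<le> b" shows "C (ex a) \<le> C (ex b)"
  using assms(2)
proof (induction b)
  case 0 then show ?case by simp
next
  case (Suc b) then show ?case using C_ex_Suc[OF assms(1), of b] by (cases "a = Suc b") auto
qed

lemma step_L2: "step \<delta> p c c' \<Longrightarrow> lpc (L c p) = L2 \<Longrightarrow> lpc (L c' p) = L3 \<and> C c' = Suc (C c) \<and> lt (L c' p) = C c"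
  by (auto simp: step_def Let_def setL_def)

lemma fi_props: assumes "execution \<delta> s0 ex" "fi_step ex p j"
  shows "C (ex (Suc j)) = Suc (C (ex j)) \<and> lt (L (ex (Suc j)) p) = C (ex j)"
proof -
  have a: "lpc (L (ex j) p) = L2" "lpc (L (ex (Suc j)) p) = L3" using assms(2) unfolding fi_step_def by auto
  from ex_tr[OF assms(1), of j] show ?thesis
  proof
    assume "ex (Suc j) = ex j" then show ?thesis using a by simp
  next
    assume "\<exists>q. step \<delta> q (ex j) (ex (Suc j))"
    then obtain q where st: "step \<delta> q (ex j) (ex (Suc j))" by blast
    show ?thesis
    proof (cases "q = p")
      case True then show ?thesis using st step_L2 a by metis
    next
      case False then show ?thesis using L_other[OF st, of p] a by simp
    qed
  qed
qed

lemma fi_strict: assumes "execution \<delta> s0 ex" "fi_step ex p a" "a < b" shows "C (ex a) < C (ex b)"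
  using fi_props[OF assms(1,2)] C_ex_mono[OF assms(1), of "Suc a" b] assms(3) by simp

lemma L2_stay: assumes "execution \<delta> s0 ex" "lpc (L (ex m) p) = L2" "\<not> fi_step ex p m"
  shows "lpc (L (ex (Suc m)) p) = L2"
proof -
  from ex_tr[OF assms(1), of m] show ?thesis
  proof
    assume "ex (Suc m) = ex m" then show ?thesis using assms by simp
  next
    assume "\<exists>q. step \<delta> q (ex m) (ex (Suc m))"
    then obtain q where st: "step \<delta> q (ex m) (ex (Suc m))" by blast
    show ?thesis
    proof (cases "q = p")
      case True then show ?thesis using st step_L2 assms unfolding fi_step_def by metis
    next
      case False then show ?thesis using L_other[OF st, of p] assms by simp
    qed
  qed
qed

lemma L2_stays: assumes "execution \<delta> s0 ex" "lpc (L (ex a) p) = L2" "\<forall>m. a \<le> m \<and> m < a + d \<longrightarrow> \<not> fi_step ex p m"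
  shows "lpc (L (ex (a + d)) p) = L2"
  using assms(3)
proof (induction d)
  case 0 then show ?case using assms(2) by simp
next
  case (Suc d) then show ?case using L2_stay[OF assms(1), of "a + d" p] by simp
qed

fun r4 :: "pcv \<Rightarrow> bool" where
  "r4 Idle = False" | "r4 L2 = False" | "r4 L3 = False" | "r4 L14 = False" | "r4 _ = True"

lemma own_r4: "step \<delta> p c c' \<Longrightarrow> r4 (lpc (L c p)) \<Longrightarrow> lt (L c' p) = lt (L c p) \<and>
   (r4 (lpc (L c' p)) \<or> (lpc (L c p) = L4 \<and> H c p \<noteq> (lt (L c p), Null)))"
  by (cases "lpc (L c p)") (auto simp: step_def Let_def setL_def split: prod.splits ptr.splits if_splits)

lemma own_L3: "step \<delta> p c c' \<Longrightarrow> lpc (L c p) = L3 \<Longrightarrow> lt (L c' p) = lt (L c p) \<and>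
   lpc (L c' p) = L4 \<and> H c' p = (lt (L c p), Null)"
  by (auto simp: step_def Let_def setL_def)

definition Pst :: "('o,'r,'st,'p) config \<Rightarrow> 'p \<Rightarrow> nat \<Rightarrow> bool" where
  "Pst c p t1 \<longleftrightarrow> (lpc (L c p) = L3 \<and> lt (L c p) = t1) \<or> (H c p = (t1, Null) \<and> lt (L c p) = t1 \<and> r4 (lpc (L c p)))"

lemma Pst_step: assumes st: "step \<delta> q c c'" and i: "inv c" and P: "Pst c p t1"
  shows "Pst c' p t1 \<or> (\<exists>r. H c' p = (t1, r) \<and> r \<noteq> Null)"
proof (cases "q = p")
  case False
  have Lp: "L c' p = L c p" using L_other[OF st] False by metis
  from P[unfolded Pst_def] show ?thesis
  proof (elim disjE)
    assume "lpc (L c p) = L3 \<and> lt (L c p) = t1" then show ?thesis using Lp by (auto simp: Pst_def)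
  next
    assume h: "H c p = (t1, Null) \<and> lt (L c p) = t1 \<and> r4 (lpc (L c p))"
    from H_change[OF st, of p] show ?thesis
    proof (elim disjE)
      assume "H c' p = H c p" then show ?thesis using h Lp by (auto simp: Pst_def)
    next
      assume "lpc (L c q) = L3 \<and> p = q \<and> H c' p = (lt (L c q), Null)" then show ?thesis using False by (auto simp: Pst_def)
    next
      assume h2: "lpc (L c q) = L6 \<and> lps (L c q) = HP p \<and> H c p = (lts (L c q), Null) \<and> H c' p = (lts (L c q), lrs (L c q))"
      then have "lrs (L c q) \<noteq> Null" using i unfolding inv_def invLs_def by (auto simp: Pst_def)
      then show ?thesis using h h2 by (auto simp: Pst_def)
    qed
  qed
next
  case True
  from P[unfolded Pst_def] show ?thesis
  proof (elim disjE)
    assume "lpc (L c p) = L3 \<and> lt (L c p) = t1" then show ?thesis using own_L3[OF st[unfolded True]] by (auto simp: Pst_def)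
  next
    assume h: "H c p = (t1, Null) \<and> lt (L c p) = t1 \<and> r4 (lpc (L c p))"
    have o: "lt (L c' p) = t1 \<and> r4 (lpc (L c' p))" using own_r4[OF st[unfolded True]] h by (auto simp: Pst_def)
    from H_change[OF st, of p] show ?thesis
    proof (elim disjE)
      assume "H c' p = H c p" then show ?thesis using h o by (auto simp: Pst_def)
    next
      assume "lpc (L c q) = L3 \<and> p = q \<and> H c' p = (lt (L c q), Null)" then show ?thesis using h True by (auto simp: Pst_def)
    next
      assume h2: "lpc (L c q) = L6 \<and> lps (L c q) = HP p \<and> H c p = (lts (L c q), Null) \<and> H c' p = (lts (L c q), lrs (L c q))"
      then have "lrs (L c q) \<noteq> Null" using i unfolding inv_def invLs_def by (auto simp: Pst_def)
      then show ?thesis using h h2 by (auto simp: Pst_def)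
    qed
  qed
qed

definition Dn :: "(nat \<Rightarrow> ('o,'r,'st,'p) config) \<Rightarrow> 'p \<Rightarrow> nat \<Rightarrow> nat \<Rightarrow> bool" where
  "Dn ex p t1 k \<longleftrightarrow> (\<exists>k'\<le>k. \<exists>r. H (ex k') p = (t1, r) \<and> r \<noteq> Null)"

lemma Pst_ex: assumes e: "execution \<delta> s0 ex" and P0: "Pst (ex a) p t1"
  shows "Pst (ex (a + d)) p t1 \<or> Dn ex p t1 (a + d)"
proof (induction d)
  case 0 then show ?case using P0 by simp
next
  case (Suc d)
  show ?case
  proof (cases "Dn ex p t1 (a + d)")
    case True then show ?thesis unfolding Dn_def by (metis add_Suc_right le_SucI)
  next
    case False
    then have P: "Pst (ex (a + d)) p t1" using Suc by simp
    from ex_tr[OF e, of "a + d"] show ?thesis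
    proof
      assume "ex (Suc (a + d)) = ex (a + d)" then show ?thesis using P by simp
    next
      assume "\<exists>q. step \<delta> q (ex (a + d)) (ex (Suc (a + d)))"
      then obtain q where st: "step \<delta> q (ex (a + d)) (ex (Suc (a + d)))" by blast
      from Pst_step[OF st inv_ex[OF e] P] show ?thesis unfolding Dn_def by auto
    qed
  qed
qed

lemma first_change: assumes "P a" "\<not> P b" "a \<le> b" shows "\<exists>k. a \<le> k \<and> k < b \<and> P k \<and> \<not> P (Suc k)"
  using assms
proof (induction b)
  case 0 then show ?case by simp
next
  case (Suc b)
  show ?case
  proof (cases "P b")
    case True then show ?thesis using Suc.prems by (metis le_Suc_eq lessI)
  next
    case False
    then have "a \<le> b" using Suc.prems by (metis le_Suc_eq)
    then show ?thesis using Suc.IH[OF Suc.prems(1) False] by (meson less_SucI)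
  qed
qed

lemma t_of_props: assumes "t_of ex (Inv p i) = Some t"
  shows "i < (LEAST j. i < j \<and> fi_step ex p j) \<and> fi_step ex p (LEAST j. i < j \<and> fi_step ex p j)
    \<and> t = C (ex (LEAST j. i < j \<and> fi_step ex p j))"
proof -
  have ex: "\<exists>j>i. fi_step ex p j" using assms by (auto split: if_splits)
  then obtain j where "i < j \<and> fi_step ex p j" by blast
  then have "i < (LEAST j. i < j \<and> fi_step ex p j) \<and> fi_step ex p (LEAST j. i < j \<and> fi_step ex p j)"
    by (rule LeastI)
  moreover have "t = C (ex (LEAST j. i < j \<and> fi_step ex p j))" using assms ex by auto
  ultimately show ?thesis by blast
qed

lemma distinct_t: assumes e: "execution \<delta> s0 ex" and oi: "is_op ex (Inv p i)" and oj: "is_op ex (Inv p j)"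
  and ij: "i < j" and ti: "t_of ex (Inv p i) = Some t" and tj: "t_of ex (Inv p j) = Some t"
  shows False
proof -
  define f1 where "f1 = (LEAST m. i < m \<and> fi_step ex p m)"
  define f2 where "f2 = (LEAST m. j < m \<and> fi_step ex p m)"
  have p1: "i < f1" "fi_step ex p f1" "t = C (ex f1)" using t_of_props[OF ti] unfolding f1_def by auto
  have p2: "j < f2" "fi_step ex p f2" "t = C (ex f2)" using t_of_props[OF tj] unfolding f2_def by auto
  have "f1 = f2"
  proof (rule ccontr)
    assume "f1 \<noteq> f2"
    then have "f1 < f2 \<or> f2 < f1" by arith
    then show False using fi_strict[OF e p1(2), of f2] fi_strict[OF e p2(2), of f1] p1(3) p2(3) by auto
  qed
  have nofi: "\<forall>m. Suc i \<le> m \<and> m < Suc i + (j - Suc i) \<longrightarrow> \<not> fi_step ex p m"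
  proof (intro allI impI)
    fix m assume "Suc i \<le> m \<and> m < Suc i + (j - Suc i)"
    then have "m < f1" "i < m" using ij p2 \<open>f1 = f2\<close> by auto
    then show "\<not> fi_step ex p m" using not_less_Least[of m "\<lambda>m. i < m \<and> fi_step ex p m"] unfolding f1_def by blast
  qed
  have "lpc (L (ex (Suc i)) p) = L2" using oi by simp
  from L2_stays[OF e this nofi] have "lpc (L (ex j) p) = L2" using ij by simp
  then show False using oj by simp
qed

theorem mainTheorem7:
  fixes \<delta> :: "('st \<times> 'o \<times> 'st \<times> 'r) set" and s0 :: 'st
    and ex :: "nat \<Rightarrow> ('o,'r,'st,'p) config"
    and o1 o2 :: "'p operation" and T T' :: nat
  assumes "execution \<delta> s0 ex"
    and "is_op ex o1" and "is_op ex o2"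
    and "stored ex T o1" and "stored ex T' o2" and "T < T'"
    and "o1 \<noteq> o2"
  shows "is_done ex T' o1"
proof (cases o1)
  case NoopOp then show ?thesis by (auto simp: is_done_def deref_def)
next
  case (Inv p i)
  note e = assms(1)
  obtain t1 where t1: "t_of ex o1 = Some t1" "fst (S (ex T)) = t1" "snd (snd (snd (S (ex T)))) = HP p"
    using assms(4) Inv unfolding stored_def by auto
  define f where "f = (LEAST m. i < m \<and> fi_step ex p m)"
  have pf: "i < f" "fi_step ex p f" "t1 = C (ex f)" using t_of_props[OF t1(1)[unfolded Inv]] unfolding f_def by auto
  define Pp where "Pp k \<longleftrightarrow> fst (S (ex k)) = t1 \<and> snd (snd (snd (S (ex k)))) = HP p" for k
  have PT: "Pp T" using t1 unfolding Pp_def by simp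
  have PT': "\<not> Pp T'"
  proof
    assume h: "Pp T'"
    obtain t2 where t2: "t_of ex o2 = Some t2" "fst (S (ex T')) = t2" "snd (snd (snd (S (ex T')))) = h_of o2"
      using assms(5) unfolding stored_def by auto
    then have ho: "h_of o2 = HP p" "t2 = t1" using h unfolding Pp_def by auto
    then obtain j where o2: "o2 = Inv p j" by (cases o2) auto
    then have "j \<noteq> i" using assms(7) Inv by auto
    then have "i < j \<or> j < i" by arith
    then show False
      using distinct_t[OF e, of p i j t1] distinct_t[OF e, of p j i t1] assms(2,3) Inv o2 t1(1) t2(1) ho(2)
      by auto
  qed
  obtain k where k: "T \<le> k" "k < T'" "Pp k" "\<not> Pp (Suc k)"
    using first_change[of Pp T T', OF PT PT'] assms(6) by auto
  have "ex (Suc k) \<noteq> ex k" using k unfolding Pp_def by metis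
  then obtain q where st: "step \<delta> q (ex k) (ex (Suc k))" using ex_tr[OF e, of k] by auto
  have "S (ex (Suc k)) \<noteq> S (ex k)" using k unfolding Pp_def by auto
  then have sq: "lpc (L (ex k) q) = L12" "S (ex k) = (lts (L (ex k) q), lss (L (ex k) q), lrs (L (ex k) q), lps (L (ex k) q))"
    using S_change[OF st] by auto
  then have lq: "lts (L (ex k) q) = t1" "lps (L (ex k) q) = HP p" using k(3) unfolding Pp_def by auto
  have ik: "inv (ex k)" by (rule inv_ex[OF e])
  have pk: "pairok (ex k) t1 (HP p)" using ik k(3) unfolding inv_def invS_def Pp_def by auto
  then have "t1 < C (ex k)" unfolding pairok_def bnd_def by auto
  then have fk: "Suc f \<le> k" using C_ex_mono[OF e, of k f] pf(3) by (metis not_less_eq_eq not_le)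
  have "Pst (ex (Suc f)) p t1" using fi_props[OF e pf(2)] pf(2,3) unfolding Pst_def fi_step_def by auto
  from Pst_ex[OF e this, of "k - Suc f"] have "Pst (ex k) p t1 \<or> Dn ex p t1 k" using fk by simp
  then show ?thesis
  proof
    assume "Pst (ex k) p t1"
    then show ?thesis
    proof (unfold Pst_def, elim disjE)
      assume "lpc (L (ex k) p) = L3 \<and> lt (L (ex k) p) = t1"
      then show ?thesis using pk unfolding pairok_def bnd_def by auto
    next
      assume "H (ex k) p = (t1, Null) \<and> lt (L (ex k) p) = t1 \<and> r4 (lpc (L (ex k) p))"
      moreover have "H (ex k) p \<noteq> (t1, Null)" using ik sq(1) lq unfolding inv_def invH_def by force
      ultimately show ?thesis by simp
    qed
  next
    assume "Dn ex p t1 k"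
    then obtain k' r where "k' \<le> k" "H (ex k') p = (t1, r)" "r \<noteq> Null" unfolding Dn_def by auto
    then show ?thesis unfolding is_done_def using Inv t1(1) k(2)
      by (intro exI[of _ k']) (auto simp: deref_def)
  qed
qed

end
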